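(* Let $\mathscr H$ be a complex Hilbert space and $\mathbf{X},\mathbf{Y},\mathbf{Z},\mathbf{W}\in\mathbb{B}(\mathscr H)^d$. Then $$w_e\left(\begin{bmatrix}\mathbf{X}&\mathbf{Y}\\\mathbf{Z}&\mathbf{W}\end{bmatrix}\right)\le w\left(\begin{bmatrix}w_e(\mathbf{X})&\|\mathbf{Y}\|\\\|\mathbf{Z}\|&w_e(\mathbf{W})\end{bmatrix}\right),$$ where on the right $w$ is the numerical radius of a $2\times2$ complex matrix.
   Context: $\mathbb{B}(\mathscr H)$ denotes the bounded linear operators on $\mathscr H$. For $\mathbf{T}=(T_1,\dots,T_d)$: $w_e(\mathbf{T})=\sup\{(\sum_{k}|\langle T_kx,x\rangle|^2)^{1/2}: \|x\|=1\}$ and $\|\mathbf{T}\|=\sup\{(\sum_k\|T_kx\|^2)^{1/2}: \|x\|=1\}$. For a matrix $A$, $w(A)=\sup\{|\langle Av,v\rangle|:\|v\|=1\}$. For $d$-tuples $\mathbf{X},\mathbf{Y},\mathbf{Z},\mathbf{W}$, $\begin{bmatrix}\mathbf{X}&\mathbf{Y}\\\mathbf{Z}&\mathbf{W}\end{bmatrix}$ denotes the $d$-tuple $\left(\begin{bmatrix}X_k&Y_k\\Z_k&W_k\end{bmatrix}\right)_{k=1}^d$ of operators on $\mathscr H\oplus\mathscr H$. *)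

theory Defs
  imports "HOL-Analysis.Analysis"
begin

text \<open>HOL has no complex vector spaces, so we introduce complex Hilbert spaces as a type class:
a real Banach space carrying a complex scalar multiplication extending the real one and a
complex inner product (conjugate-linear in the first argument, linear in the second) whose
induced norm is the given norm.\<close>

class complex_hilbert = banach +
  fixes scaleC :: "complex \<Rightarrow> 'a \<Rightarrow> 'a"
    and cinner :: "'a \<Rightarrow> 'a \<Rightarrow> complex"
  assumes scaleC_add_right: "scaleC c (x + y) = scaleC c x + scaleC c y"
    and scaleC_add_left: "scaleC (c + d) x = scaleC c x + scaleC d x"
    and scaleC_scaleC: "scaleC c (scaleC d x) = scaleC (c * d) x"
    and scaleC_one: "scaleC 1 x = x"
    and scaleC_of_real: "scaleC (complex_of_real r) x = scaleR r x"
    and cinner_commute: "cinner x y = cnj (cinner y x)"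
    and cinner_add_left: "cinner (x + y) z = cinner x z + cinner y z"
    and cinner_scaleC_left: "cinner (scaleC c x) y = cnj c * cinner x y"
    and cinner_norm: "cinner x x = complex_of_real ((norm x)\<^sup>2)"

text \<open>The Hilbert direct sum \<open>H \<oplus> H\<close> (more generally \<open>H \<oplus> K\<close>), realised on the product type,
whose norm in HOL-Analysis is already \<open>sqrt (norm x^2 + norm y^2)\<close>.\<close>

instantiation prod :: (complex_hilbert, complex_hilbert) complex_hilbert
begin

definition scaleC_prod_def: "scaleC c p = (scaleC c (fst p), scaleC c (snd p))"
definition cinner_prod_def: "cinner p q = cinner (fst p) (fst q) + cinner (snd p) (snd q)"

instance
proof
  fix c d :: complex and x y z :: "'a \<times> 'b" and r :: real
  show "scaleC c (x + y) = scaleC c x + scaleC c y"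
    by (simp add: scaleC_prod_def scaleC_add_right)
  show "scaleC (c + d) x = scaleC c x + scaleC d x"
    by (simp add: scaleC_prod_def scaleC_add_left)
  show "scaleC c (scaleC d x) = scaleC (c * d) x"
    by (simp add: scaleC_prod_def scaleC_scaleC)
  show "scaleC 1 x = x"
    by (simp add: scaleC_prod_def scaleC_one)
  show "scaleC (complex_of_real r) x = scaleR r x"
    by (simp add: scaleC_prod_def scaleC_of_real scaleR_prod_def)
  show "cinner x y = cnj (cinner y x)"
    by (simp add: cinner_prod_def cinner_commute[of "fst x"] cinner_commute[of "snd x"])
  show "cinner (x + y) z = cinner x z + cinner y z"
    by (simp add: cinner_prod_def cinner_add_left)
  show "cinner (scaleC c x) y = cnj c * cinner x y"
    by (simp add: cinner_prod_def scaleC_prod_def cinner_scaleC_left distrib_left)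
  show "cinner x x = complex_of_real ((norm x)\<^sup>2)"
    by (simp add: cinner_prod_def cinner_norm norm_prod_def)
qed

end

definition bounded_op :: "('a::complex_hilbert \<Rightarrow> 'a) \<Rightarrow> bool" where
  "bounded_op T \<longleftrightarrow>
     (\<forall>x y. T (x + y) = T x + T y) \<and>
     (\<forall>c x. T (scaleC c x) = scaleC c (T x)) \<and>
     (\<exists>K. \<forall>x. norm (T x) \<le> norm x * K)"

definition block_op ::
  "('a::complex_hilbert \<Rightarrow> 'a) \<Rightarrow> ('a \<Rightarrow> 'a) \<Rightarrow> ('a \<Rightarrow> 'a) \<Rightarrow> ('a \<Rightarrow> 'a)
     \<Rightarrow> ('a \<times> 'a \<Rightarrow> 'a \<times> 'a)" where
  "block_op X Y Z W = (\<lambda>p. (X (fst p) + Y (snd p), Z (fst p) + W (snd p)))"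

definition block_tuple ::
  "('d \<Rightarrow> 'a::complex_hilbert \<Rightarrow> 'a) \<Rightarrow> ('d \<Rightarrow> 'a \<Rightarrow> 'a) \<Rightarrow> ('d \<Rightarrow> 'a \<Rightarrow> 'a)
     \<Rightarrow> ('d \<Rightarrow> 'a \<Rightarrow> 'a) \<Rightarrow> ('d \<Rightarrow> 'a \<times> 'a \<Rightarrow> 'a \<times> 'a)" where
  "block_tuple X Y Z W = (\<lambda>k. block_op (X k) (Y k) (Z k) (W k))"

text \<open>Suprema over the unit sphere; \<open>0\<close> is inserted so that the value is \<open>0\<close> on the trivial space
(for a nontrivial space this does not change the supremum, all quantities being nonnegative).\<close>

definition euclid_radius :: "('d::finite \<Rightarrow> 'a::complex_hilbert \<Rightarrow> 'a) \<Rightarrow> real" where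
  "euclid_radius T =
     Sup (insert 0 {sqrt (\<Sum>k\<in>UNIV. (cmod (cinner (T k x) x))\<^sup>2) | x. norm x = 1})"

definition tuple_norm :: "('d::finite \<Rightarrow> 'a::complex_hilbert \<Rightarrow> 'a) \<Rightarrow> real" where
  "tuple_norm T =
     Sup (insert 0 {sqrt (\<Sum>k\<in>UNIV. (norm (T k x))\<^sup>2) | x. norm x = 1})"

definition num_radius :: "complex^'n^'n \<Rightarrow> real" where
  "num_radius A = Sup {cmod (\<Sum>i\<in>UNIV. cnj (v $ i) * ((A *v v) $ i)) | v :: complex^'n. norm v = 1}"

definition mat2 :: "complex \<Rightarrow> complex \<Rightarrow> complex \<Rightarrow> complex \<Rightarrow> complex^2^2" where
  "mat2 a b c d = (\<chi> i j. if i = 1 then (if j = 1 then a else b) else (if j = 1 then c else d))"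

end

theory Submission
  imports Defs
begin

context complex_hilbert begin

lemma cinner_zero_left[simp]: "cinner 0 y = 0"
  using cinner_add_left[of 0 0 y] by simp

lemma cinner_zero_right[simp]: "cinner y 0 = 0"
  using cinner_commute[of y 0] by simp

lemma cinner_add_right: "cinner x (y + z) = cinner x y + cinner x z"
  using cinner_commute[of x "y+z"] cinner_add_left[of y z x] cinner_commute[of y x] cinner_commute[of z x]
  by simp

lemma cinner_scaleC_right: "cinner x (scaleC c y) = c * cinner x y"
  using cinner_commute[of x "scaleC c y"] cinner_scaleC_left[of c y x] cinner_commute[of y x]
  by simp

lemma cinner_scaleR_left: "cinner (scaleR r x) y = of_real r * cinner x y"
  using cinner_scaleC_left[of "of_real r" x y] scaleC_of_real[of r x] by simp

lemma cinner_scaleR_right: "cinner x (scaleR r y) = of_real r * cinner x y"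
  using cinner_scaleC_right[of x "of_real r" y] scaleC_of_real[of r y] by simp

lemma norm_sq_cinner: "(norm x)^2 = Re (cinner x x)"
  using cinner_norm[of x] by simp

lemma norm_scaleC_unit: assumes "cmod c = 1" shows "norm (scaleC c y) = norm y"
proof -
  have "cnj c * c = 1" using assms
    by (metis complex_norm_square mult.commute of_real_1 power_one)
  have "cinner (scaleC c y) (scaleC c y) = (cnj c * c) * cinner y y"
    by (simp add: cinner_scaleC_left cinner_scaleC_right mult.assoc)
  hence "(norm (scaleC c y))^2 = (norm y)^2"
    using \<open>cnj c * c = 1\<close> by (simp add: norm_sq_cinner)
  thus ?thesis by (simp add: power2_eq_iff_nonneg)
qed

lemma Re_cinner_le: "Re (cinner a b) \<le> norm a * norm b"
proof -
  have "(norm (a+b))^2 = (norm a)^2 + (norm b)^2 + 2 * Re (cinner a b)"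
    unfolding norm_sq_cinner
    by (simp add: cinner_add_left cinner_add_right cinner_commute[of b a])
  moreover have "(norm (a+b))^2 \<le> (norm a + norm b)^2"
    by (simp add: norm_triangle_ineq power_mono)
  ultimately show ?thesis by (simp add: power2_sum)
qed

lemma cinner_cs: "cmod (cinner a b) \<le> norm a * norm b"
proof (cases "cinner a b = 0")
  case True thus ?thesis by simp
next
  case False
  define c where "c = sgn (cinner a b)"
  have c1: "cmod c = 1" using False by (simp add: c_def norm_sgn)
  have "cinner (scaleC c a) b = cnj c * cinner a b" by (simp add: cinner_scaleC_left)
  also have "\<dots> = of_real (cmod (cinner a b))"
  proof -
    have "cnj (sgn (cinner a b)) * cinner a b = (cnj (cinner a b) * cinner a b) / of_real (cmod (cinner a b))"
      by (simp add: sgn_eq divide_inverse)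
    also have "\<dots> = of_real (cmod (cinner a b))^2 / of_real (cmod (cinner a b))"
      using complex_norm_square[of "cinner a b"] by (simp add: mult.commute)
    also have "\<dots> = of_real (cmod (cinner a b))" using False by (simp add: power2_eq_square)
    finally show ?thesis unfolding c_def .
  qed
  finally have "cmod (cinner a b) = Re (cinner (scaleC c a) b)" by simp
  also have "\<dots> \<le> norm a * norm b" using Re_cinner_le[of "scaleC c a" b] norm_scaleC_unit[OF c1] by simp
  finally show ?thesis .
qed

end

lemma mat2_apply[simp]:
  "mat2 a b c d $ 1 $ 1 = a" "mat2 a b c d $ 1 $ 2 = b"
  "mat2 a b c d $ 2 $ 1 = c" "mat2 a b c d $ 2 $ 2 = d"
  by (simp_all add: mat2_def)

lemma quad_form_2:
  "(\<Sum>i\<in>UNIV. cnj (v $ i) * ((mat2 a b c d *v v) $ i)) =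
     cnj (v$1) * (a * v$1 + b * v$2) + cnj (v$2) * (c * v$1 + d * v$2)"
  by (simp add: sum_2 matrix_vector_mult_def)

lemma nr_bdd: "bdd_above {cmod (\<Sum>i\<in>UNIV. cnj (v $ i) * ((mat2 a b c d *v v) $ i)) | v :: complex^2. norm v = 1}"
proof -
  have "cmod (\<Sum>i\<in>UNIV. cnj (v $ i) * ((mat2 a b c d *v v) $ i)) \<le> cmod a + cmod b + cmod c + cmod d"
    if v: "norm v = 1" for v :: "complex^2"
  proof -
  have n1: "cmod (v$1) \<le> 1" "cmod (v$2) \<le> 1" using Finite_Cartesian_Product.norm_nth_le[of v] v by auto
  have "cmod (cnj (v$1) * (a * v$1 + b * v$2) + cnj (v$2) * (c * v$1 + d * v$2))
     \<le> cmod (v$1) * (cmod a * cmod (v$1) + cmod b * cmod (v$2)) + cmod (v$2) * (cmod c * cmod (v$1) + cmod d * cmod (v$2))"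
    by (smt (verit) norm_mult norm_triangle_ineq complex_mod_cnj mult_left_mono norm_ge_zero)
  also have "\<dots> \<le> 1 * (cmod a * 1 + cmod b * 1) + 1 * (cmod c * 1 + cmod d * 1)"
    using n1 by (intro add_mono mult_mono) auto
  finally show "cmod (\<Sum>i\<in>UNIV. cnj (v $ i) * ((mat2 a b c d *v v) $ i)) \<le> cmod a + cmod b + cmod c + cmod d"
    unfolding quad_form_2 by simp
  qed
  thus ?thesis by (intro bdd_aboveI[where M="cmod a + cmod b + cmod c + cmod d"]) auto
qed

lemma nr_ge:
  fixes a b c d t1 t2 :: real
  assumes "a \<ge> 0" "b \<ge> 0" "c \<ge> 0" "d \<ge> 0" "t1 \<ge> 0" "t2 \<ge> 0" "t1^2 + t2^2 = 1"
  shows "a * t1^2 + b * (t1 * t2) + c * (t1 * t2) + d * t2^2 \<le> num_radius (mat2 a b c d)"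
proof -
  define v :: "complex^2" where "v = (\<chi> i. if i = 1 then of_real t1 else of_real t2)"
  have v1: "v$1 = of_real t1" "v$2 = of_real t2" by (simp_all add: v_def)
  have "norm v = sqrt (t1^2 + t2^2)"
    unfolding norm_vec_def L2_set_def by (simp add: sum_2 v1)
  hence nv: "norm v = 1" using assms by simp
  have "(\<Sum>i\<in>UNIV. cnj (v $ i) * ((mat2 a b c d *v v) $ i)) =
        of_real (a * t1^2 + b * (t1 * t2) + c * (t1 * t2) + d * t2^2)"
    unfolding quad_form_2 v1 by (simp add: power2_eq_square algebra_simps)
  hence "cmod (\<Sum>i\<in>UNIV. cnj (v $ i) * ((mat2 a b c d *v v) $ i)) = \<bar>a * t1^2 + b * (t1 * t2) + c * (t1 * t2) + d * t2^2\<bar>"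
    by (simp only: norm_of_real)
  hence "cmod (\<Sum>i\<in>UNIV. cnj (v $ i) * ((mat2 a b c d *v v) $ i)) = a * t1^2 + b * (t1 * t2) + c * (t1 * t2) + d * t2^2"
    using assms by simp
  note eq = this
  have mem: "cmod (\<Sum>i\<in>UNIV. cnj (v $ i) * ((mat2 a b c d *v v) $ i)) \<in>
     {cmod (\<Sum>i\<in>UNIV. cnj (w $ i) * ((mat2 a b c d *v w) $ i)) | w :: complex^2. norm w = 1}"
    using nv by blast
  from cSup_upper[OF mem nr_bdd] eq show ?thesis unfolding num_radius_def by simp
qed

lemma bop_scaleR: "bounded_op T \<Longrightarrow> T (scaleR r x) = scaleR r (T x)"
  unfolding bounded_op_def by (metis scaleC_of_real)

lemma bop_zero: "bounded_op T \<Longrightarrow> T 0 = 0"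
  unfolding bounded_op_def by (metis add_cancel_right_right add_0)

lemma er_bdd:
  fixes T :: "'d::finite \<Rightarrow> 'a::complex_hilbert \<Rightarrow> 'a"
  assumes "\<forall>k. bounded_op (T k)"
  shows "bdd_above (insert 0 {sqrt (\<Sum>k\<in>UNIV. (cmod (cinner (T k x) x))\<^sup>2) | x. norm x = 1})"
    and "bdd_above (insert 0 {sqrt (\<Sum>k\<in>UNIV. (norm (T k x))\<^sup>2) | x. norm x = 1})"
proof -
  have "\<forall>k. \<exists>K. \<forall>x. norm (T k x) \<le> norm x * K" using assms unfolding bounded_op_def by blast
  then obtain K where K: "\<And>k x. norm (T k x) \<le> norm x * K k" by metis
  have b1: "sqrt (\<Sum>k\<in>UNIV. (cmod (cinner (T k x) x))\<^sup>2) \<le> L2_set K UNIV" if "norm x = 1" for x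
    unfolding L2_set_def[symmetric]
  proof (rule L2_set_mono)
    fix k
    show "cmod (cinner (T k x) x) \<le> K k" using cinner_cs[of "T k x" x] K[of k x] that by simp
  qed simp
  have b2: "sqrt (\<Sum>k\<in>UNIV. (norm (T k x))\<^sup>2) \<le> L2_set K UNIV" if "norm x = 1" for x
    unfolding L2_set_def[symmetric]
  proof (rule L2_set_mono)
    fix k
    show "norm (T k x) \<le> K k" using K[of k x] that by simp
  qed simp
  show "bdd_above (insert 0 {sqrt (\<Sum>k\<in>UNIV. (cmod (cinner (T k x) x))\<^sup>2) | x. norm x = 1})"
    by (rule bdd_aboveI[where M="L2_set K UNIV"]) (auto intro: b1)
  show "bdd_above (insert 0 {sqrt (\<Sum>k\<in>UNIV. (norm (T k x))\<^sup>2) | x. norm x = 1})"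
    by (rule bdd_aboveI[where M="L2_set K UNIV"]) (auto intro: b2)
qed



lemma er_nonneg: "\<forall>k. bounded_op (T k) \<Longrightarrow> 0 \<le> euclid_radius T"
  unfolding euclid_radius_def by (rule cSup_upper[OF _ er_bdd(1)]) auto

lemma tn_nonneg: "\<forall>k. bounded_op (T k) \<Longrightarrow> 0 \<le> tuple_norm T"
  unfolding tuple_norm_def by (rule cSup_upper[OF _ er_bdd(2)]) auto

lemma er_le:
  fixes T :: "'d::finite \<Rightarrow> 'a::complex_hilbert \<Rightarrow> 'a"
  assumes T: "\<forall>k. bounded_op (T k)"
  shows "L2_set (\<lambda>k. cmod (cinner (T k x) x)) UNIV \<le> euclid_radius T * (norm x)^2"
proof (cases "x = 0")
  case True
  thus ?thesis using T by (simp add: bop_zero er_nonneg L2_set_def)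
next
  case False
  define n where "n = norm x"
  have n: "n > 0" using False by (simp add: n_def)
  define u where "u = scaleR (1/n) x"
  have nu: "norm u = 1" using n by (simp add: u_def n_def)
  have eq: "cinner (T k u) u = of_real ((1/n)^2) * cinner (T k x) x" for k
    using T by (simp add: u_def bop_scaleR cinner_scaleR_left cinner_scaleR_right power2_eq_square)
  have p: "cmod (cinner (T k u) u) = (1/n)^2 * cmod (cinner (T k x) x)" for k
    by (simp only: eq norm_mult norm_of_real power_abs abs_divide abs_one) (use n in simp)
  have "L2_set (\<lambda>k. cmod (cinner (T k u) u)) UNIV = L2_set (\<lambda>k. (1/n)^2 * cmod (cinner (T k x) x)) UNIV"
    by (simp only: p)
  hence "L2_set (\<lambda>k. cmod (cinner (T k u) u)) UNIV = (1/n)^2 * L2_set (\<lambda>k. cmod (cinner (T k x) x)) UNIV"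
    by (simp add: L2_set_right_distrib)
  moreover have "L2_set (\<lambda>k. cmod (cinner (T k u) u)) UNIV \<le> euclid_radius T"
    unfolding euclid_radius_def L2_set_def
    by (rule cSup_upper[OF _ er_bdd(1)[OF T]]) (use nu in auto)
  ultimately have "(1/n)^2 * L2_set (\<lambda>k. cmod (cinner (T k x) x)) UNIV \<le> euclid_radius T" by simp
  hence "n^2 * ((1/n)^2 * L2_set (\<lambda>k. cmod (cinner (T k x) x)) UNIV) \<le> n^2 * euclid_radius T"
    by (simp add: mult_left_mono)
  thus ?thesis using n by (simp add: n_def power_divide field_simps)
qed

lemma tn_le:
  fixes T :: "'d::finite \<Rightarrow> 'a::complex_hilbert \<Rightarrow> 'a"
  assumes T: "\<forall>k. bounded_op (T k)"
  shows "L2_set (\<lambda>k. norm (T k x)) UNIV \<le> tuple_norm T * norm x"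
proof (cases "x = 0")
  case True
  thus ?thesis using T by (simp add: bop_zero tn_nonneg L2_set_def)
next
  case False
  define n where "n = norm x"
  have n: "n > 0" using False by (simp add: n_def)
  define u where "u = scaleR (1/n) x"
  have nu: "norm u = 1" using n by (simp add: u_def n_def)
  have p: "norm (T k u) = (1/n) * norm (T k x)" for k
    using T n by (simp add: u_def bop_scaleR)
  have "L2_set (\<lambda>k. norm (T k u)) UNIV = L2_set (\<lambda>k. (1/n) * norm (T k x)) UNIV"
    by (simp only: p)
  hence "L2_set (\<lambda>k. norm (T k u)) UNIV = (1/n) * L2_set (\<lambda>k. norm (T k x)) UNIV"
  proof -
    have "(1/n) * L2_set (\<lambda>k. norm (T k x)) UNIV = L2_set (\<lambda>k. (1/n) * norm (T k x)) UNIV"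
      by (rule L2_set_right_distrib) (use n in simp)
    thus ?thesis using \<open>L2_set (\<lambda>k. norm (T k u)) UNIV = _\<close> by simp
  qed
  moreover have "L2_set (\<lambda>k. norm (T k u)) UNIV \<le> tuple_norm T"
    unfolding tuple_norm_def L2_set_def
    by (rule cSup_upper[OF _ er_bdd(2)[OF T]]) (use nu in auto)
  ultimately have "(1/n) * L2_set (\<lambda>k. norm (T k x)) UNIV \<le> tuple_norm T" by simp
  thus ?thesis using n by (simp add: n_def field_simps)
qed

lemma off_le:
  fixes T :: "'d::finite \<Rightarrow> 'a::complex_hilbert \<Rightarrow> 'a"
  assumes T: "\<forall>k. bounded_op (T k)"
  shows "L2_set (\<lambda>k. cmod (cinner (T k y) x)) UNIV \<le> tuple_norm T * (norm y * norm x)"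
proof -
  have "L2_set (\<lambda>k. cmod (cinner (T k y) x)) UNIV \<le> L2_set (\<lambda>k. norm (T k y) * norm x) UNIV"
    by (rule L2_set_mono) (auto simp: cinner_cs)
  also have "\<dots> = L2_set (\<lambda>k. norm (T k y)) UNIV * norm x"
    by (simp add: L2_set_left_distrib)
  also have "\<dots> \<le> tuple_norm T * norm y * norm x"
    using tn_le[OF T, of y] by (simp add: mult_right_mono)
  finally show ?thesis by (simp add: mult.assoc)
qed


theorem theorem3p2:
  fixes X Y Z W :: "'d::finite \<Rightarrow> 'a::complex_hilbert \<Rightarrow> 'a"
  assumes "\<forall>k. bounded_op (X k)" and "\<forall>k. bounded_op (Y k)"
    and "\<forall>k. bounded_op (Z k)" and "\<forall>k. bounded_op (W k)"
  shows "euclid_radius (block_tuple X Y Z W)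
           \<le> num_radius (mat2 (complex_of_real (euclid_radius X)) (complex_of_real (tuple_norm Y))
                              (complex_of_real (tuple_norm Z)) (complex_of_real (euclid_radius W)))"
proof -
  note X = assms(1) and Y = assms(2) and Z = assms(3) and W = assms(4)
  let ?a = "euclid_radius X" and ?b = "tuple_norm Y" and ?c = "tuple_norm Z" and ?d = "euclid_radius W"
  let ?R = "num_radius (mat2 (complex_of_real ?a) (complex_of_real ?b) (complex_of_real ?c) (complex_of_real ?d))"
  have nn: "0 \<le> ?a" "0 \<le> ?b" "0 \<le> ?c" "0 \<le> ?d"
    using er_nonneg[OF X] tn_nonneg[OF Y] tn_nonneg[OF Z] er_nonneg[OF W] by auto
  have R0: "0 \<le> ?R"
    using nr_ge[OF nn, of 1 0] nn(1) by simp
  have main: "sqrt (\<Sum>k\<in>UNIV. (cmod (cinner (block_tuple X Y Z W k p) p))\<^sup>2) \<le> ?R"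
    if np: "norm p = 1" for p :: "'a \<times> 'a"
  proof -
    obtain x1 x2 where p: "p = (x1, x2)" by fastforce
    define t1 where "t1 = norm x1"
    define t2 where "t2 = norm x2"
    have t: "t1^2 + t2^2 = 1" using np unfolding p t1_def t2_def norm_prod_def by simp
    define A where "A k = cinner (X k x1) x1" for k
    define B where "B k = cinner (Y k x2) x1" for k
    define C where "C k = cinner (Z k x1) x2" for k
    define D where "D k = cinner (W k x2) x2" for k
    have e: "cinner (block_tuple X Y Z W k p) p = A k + B k + C k + D k" for k
      unfolding p block_tuple_def block_op_def A_def B_def C_def D_def
      by (simp add: cinner_prod_def cinner_add_left)
    have "sqrt (\<Sum>k\<in>UNIV. (cmod (cinner (block_tuple X Y Z W k p) p))\<^sup>2)
        = L2_set (\<lambda>k. cmod (A k + B k + C k + D k)) UNIV"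
      unfolding L2_set_def e ..
    also have "\<dots> \<le> L2_set (\<lambda>k. cmod (A k) + cmod (B k) + cmod (C k) + cmod (D k)) UNIV"
    proof (rule L2_set_mono)
      fix k
      have "cmod (A k + B k + C k + D k) \<le> cmod (A k + B k + C k) + cmod (D k)" by (rule norm_triangle_ineq)
      moreover have "cmod (A k + B k + C k) \<le> cmod (A k + B k) + cmod (C k)" by (rule norm_triangle_ineq)
      moreover have "cmod (A k + B k) \<le> cmod (A k) + cmod (B k)" by (rule norm_triangle_ineq)
      ultimately show "cmod (A k + B k + C k + D k) \<le> cmod (A k) + cmod (B k) + cmod (C k) + cmod (D k)"
        by linarith
    qed simp
    also have "\<dots> \<le> L2_set (\<lambda>k. cmod (A k)) UNIV + L2_set (\<lambda>k. cmod (B k)) UNIV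
                   + L2_set (\<lambda>k. cmod (C k)) UNIV + L2_set (\<lambda>k. cmod (D k)) UNIV"
    proof -
      let ?f = "\<lambda>k. cmod (A k)" and ?g = "\<lambda>k. cmod (B k)" and ?h = "\<lambda>k. cmod (C k)" and ?j = "\<lambda>k. cmod (D k)"
      have 1: "L2_set (\<lambda>k. (?f k + ?g k + ?h k) + ?j k) UNIV \<le> L2_set (\<lambda>k. ?f k + ?g k + ?h k) UNIV + L2_set ?j UNIV"
        by (rule L2_set_triangle_ineq)
      have 2: "L2_set (\<lambda>k. (?f k + ?g k) + ?h k) UNIV \<le> L2_set (\<lambda>k. ?f k + ?g k) UNIV + L2_set ?h UNIV"
        by (rule L2_set_triangle_ineq)
      have 3: "L2_set (\<lambda>k. ?f k + ?g k) UNIV \<le> L2_set ?f UNIV + L2_set ?g UNIV"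
        by (rule L2_set_triangle_ineq)
      from 1 2 3 show ?thesis by linarith
    qed
    also have "\<dots> \<le> ?a * t1^2 + ?b * (t1 * t2) + ?c * (t1 * t2) + ?d * t2^2"
      using er_le[OF X, of x1] off_le[OF Y, of x2 x1] off_le[OF Z, of x1 x2] er_le[OF W, of x2]
      unfolding A_def B_def C_def D_def t1_def t2_def
      by (simp only: mult.commute[of "norm x2" "norm x1"])
    also have "\<dots> \<le> ?R"
      using nr_ge[OF nn _ _ t] by (simp add: t1_def t2_def)
    finally show ?thesis .
  qed
  show ?thesis
    unfolding euclid_radius_def[of "block_tuple X Y Z W"]
    by (rule cSup_least) (use main R0 in auto)
qed


end
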